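(* Let $A\in\mathbb{R}^{n\times m}$, let $b\in\mathbb{R}^n$ lie in the span of the columns of $A$, and let $x^*$ be an optimal solution of $\min_{x\in\mathbb{R}^m:\, A x = b} \|x\|_\infty$. Let $r \in \Delta_m$ have strictly positive entries. Then \[ \|x^*\|_\infty^2 \geq b^\top \left(A\,\mathbf{D}(r)^{-1}A^{\top}\right)^+ b . \]
   Context: $\Delta_m=\{p\in\mathbb{R}^m: \sum_i p_i=1,\ p_i\ge 0\}$ is the probability simplex. For a vector $r$, $\mathbf{D}(r)$ is the diagonal matrix with diagonal $r$. For a symmetric matrix $L$, $L^+$ denotes its Moore–Penrose pseudoinverse. *)

theory Defs
  imports "HOL-Analysis.Analysis"
begin

text \<open>Diagonal matrix D(r) with diagonal r.\<close>
definition diag_mat :: "real ^ 'n \<Rightarrow> real ^ 'n ^ 'n" where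
  "diag_mat r = (\<chi> i j. if i = j then r $ i else 0)"

text \<open>Moore-Penrose pseudoinverse: the unique matrix satisfying the four Penrose conditions.\<close>
definition penrose :: "real ^ 'm ^ 'n \<Rightarrow> real ^ 'n ^ 'm \<Rightarrow> bool" where
  "penrose L X \<longleftrightarrow> L ** X ** L = L \<and> X ** L ** X = X \<and>
     transpose (L ** X) = L ** X \<and> transpose (X ** L) = X ** L"

definition pinv :: "real ^ 'm ^ 'n \<Rightarrow> real ^ 'n ^ 'm" where
  "pinv L = (THE X. penrose L X)"

text \<open>Probability prob_simplex.\<close>
definition prob_simplex :: "(real ^ 'm) set" where
  "prob_simplex = {p. (\<forall>i. p $ i \<ge> 0) \<and> sum (\<lambda>i. p $ i) UNIV = 1}"

end

theory Submission
  imports Defs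
begin

lemma sym_from_inner:
  fixes M :: "real^'n^'n"
  assumes "\<And>x y. (M *v x) \<bullet> y = x \<bullet> (M *v y)"
  shows "transpose M = M"
proof -
  have "transpose M *v x = M *v x" for x
  proof -
    have "\<forall>y. (transpose M *v x - M *v x) \<bullet> y = 0"
      using assms by (simp add: inner_diff_left dot_lmul_matrix)
    then show ?thesis by (metis inner_eq_zero_iff eq_iff_diff_eq_0)
  qed
  then show ?thesis by (simp add: matrix_eq)
qed

lemma symL_inner:
  fixes L :: "real^'n^'n"
  assumes "transpose L = L"
  shows "(L *v x) \<bullet> y = x \<bullet> (L *v y)"
  by (metis assms dot_lmul_matrix transpose_matrix_vector)

lemma penrose_exists:
  fixes L :: "real^'n^'n"
  assumes sym: "transpose L = L"
  shows "\<exists>X. penrose L X"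
proof -
  note symf = symL_inner[OF sym]
  define V where "V = range (\<lambda>x. L *v x)"
  have subV: "subspace V" unfolding V_def
    by (intro real_vector.linear_subspace_image matrix_vector_mul_linear subspace_UNIV)
  have LV: "L *v x \<in> V" for x unfolding V_def by auto
  have kerL: "L *v w = 0" if "\<And>v. v \<in> V \<Longrightarrow> w \<bullet> v = 0" for w
  proof -
    have "(L *v w) \<bullet> (L *v w) = w \<bullet> (L *v (L *v w))" by (rule symf)
    also have "\<dots> = 0" using that LV by blast
    finally show ?thesis by simp
  qed
  have injV: "inj_on (\<lambda>x. L *v x) V"
  proof (rule inj_onI)
    fix x y assume xy: "x \<in> V" "y \<in> V" "L *v x = L *v y"
    have d: "x - y \<in> V" using subV xy by (simp add: subspace_diff)
    then obtain u where u: "x - y = L *v u" unfolding V_def by auto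
    have "(x - y) \<bullet> (x - y) = u \<bullet> (L *v (x - y))" using u symf by metis
    also have "\<dots> = 0" using xy by (simp add: matrix_vector_mult_diff_distrib)
    finally show "x = y" by simp
  qed
  obtain g where g: "range g \<subseteq> V" "linear g" "\<forall>v\<in>V. g (L *v v) = v"
    using real_vector.linear_exists_left_inverse_on[OF matrix_vector_mul_linear subV injV] by blast
  obtain B where B: "B \<subseteq> V" "pairwise orthogonal B" "\<And>x. x \<in> B \<Longrightarrow> norm x = 1"
      "independent B" "span B = V"
    using orthonormal_basis_subspace[OF subV] by metis
  have finB: "finite B" using B(4) by (rule independent_imp_finite)
  define p where "p x = (\<Sum>u\<in>B. (u \<bullet> x) *\<^sub>R u)" for x
  have linp: "linear p" unfolding p_def
  proof (intro linear_compose_sum ballI)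
    fix u show "linear (\<lambda>x. (u \<bullet> x) *\<^sub>R u)"
      by (rule linearI) (simp_all add: inner_add_right scaleR_add_left)
  qed
  have pV: "p x \<in> V" for x
  proof -
    have "p x \<in> span B" unfolding p_def by (rule span_sum, rule span_scale, rule span_base)
    then show ?thesis using B(5) by simp
  qed
  have pB: "(x - p x) \<bullet> v = 0" if "v \<in> B" for x v
  proof -
    have "p x \<bullet> v = (\<Sum>u\<in>B. (u \<bullet> x) * (u \<bullet> v))" unfolding p_def
      by (simp add: inner_sum_left)
    also have "\<dots> = (v \<bullet> x) * (v \<bullet> v) + (\<Sum>u\<in>B-{v}. (u \<bullet> x) * (u \<bullet> v))"
      using finB that by (simp add: sum.remove)
    also have "(\<Sum>u\<in>B-{v}. (u \<bullet> x) * (u \<bullet> v)) = 0"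
      using B(2) that by (intro sum.neutral) (auto simp: pairwise_def orthogonal_def)
    also have "v \<bullet> v = 1" using B(3)[OF that] by (simp add: norm_eq_1)
    finally have e: "p x \<bullet> v = x \<bullet> v" by (simp add: inner_commute)
    show ?thesis using e by (simp add: inner_diff_left)
  qed
  have pO: "(x - p x) \<bullet> v = 0" if "v \<in> V" for x v
    using orthogonal_to_span[of v B "x - p x"] pB that B(5) by (auto simp: orthogonal_def)
  have pid: "p v = v" if "v \<in> V" for v
  proof -
    have "v - p v \<in> V" using subV that pV by (simp add: subspace_diff)
    then have "(v - p v) \<bullet> (v - p v) = 0" using pO by blast
    then show ?thesis by simp
  qed
  have psym: "p x \<bullet> y = x \<bullet> p y" for x y
    unfolding p_def by (simp add: inner_sum_left inner_sum_right inner_commute mult.commute)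
  have Lp: "L *v p x = L *v x" for x
  proof -
    have "L *v (x - p x) = 0" using kerL pO by blast
    then show ?thesis by (simp add: matrix_vector_mult_diff_distrib)
  qed
  define X where "X = matrix (g \<circ> p)"
  have linh: "linear (g \<circ> p)" using linear_compose[OF linp g(2)] by simp
  have Xv: "X *v x = g (p x)" for x
    unfolding X_def using matrix_works[OF linh[unfolded linear_matrix_vector_mul_eq[symmetric]]] by simp
  have LX: "L *v (X *v x) = p x" for x
  proof -
    obtain u where u: "p x = L *v u" using pV[of x] unfolding V_def by auto
    have "g (p x) = p u" using u Lp[of u] g(3) pV[of u] by metis
    then show ?thesis using Xv u Lp by simp
  qed
  have XL: "X *v (L *v x) = p x" for x
    using Xv pid[OF LV] Lp g(3) pV by metis
  have gV: "g y \<in> V" for y using g(1) by blast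
  have "penrose L X"
    unfolding penrose_def
  proof (intro conjI)
    show "L ** X ** L = L"
      by (simp add: matrix_eq matrix_vector_mul_assoc[symmetric] LX XL Lp)
    show "X ** L ** X = X"
    proof -
      have "X *v (L *v (X *v x)) = X *v x" for x
        using XL[of "X *v x"] pid[OF gV] Xv by metis
      then show ?thesis by (simp add: matrix_eq matrix_vector_mul_assoc[symmetric])
    qed
    show "transpose (L ** X) = L ** X"
      by (rule sym_from_inner) (simp add: matrix_vector_mul_assoc[symmetric] LX psym)
    show "transpose (X ** L) = X ** L"
      by (rule sym_from_inner) (simp add: matrix_vector_mul_assoc[symmetric] XL psym)
  qed
  then show ?thesis by blast
qed

lemma penrose_transpose:
  assumes "penrose L X" shows "penrose (transpose L) (transpose X)"
  using assms unfolding penrose_def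
  by (metis matrix_transpose_mul matrix_mul_assoc transpose_transpose)

lemma penrose_unique:
  fixes L :: "real^'m^'n"
  assumes X: "penrose L X" and Y: "penrose L Y" shows "X = Y"
proof -
  note tm = matrix_transpose_mul
  from X have X1: "L ** X ** L = L" and X2: "X ** L ** X = X"
    and X3: "transpose X ** transpose L = L ** X" and X4: "transpose L ** transpose X = X ** L"
    unfolding penrose_def by (auto simp: tm)
  from Y have Y1: "L ** Y ** L = L" and Y2: "Y ** L ** Y = Y"
    and Y3: "transpose Y ** transpose L = L ** Y" and Y4: "transpose L ** transpose Y = Y ** L"
    unfolding penrose_def by (auto simp: tm)
  have tL: "transpose L = transpose L ** transpose Y ** transpose L"
    using Y1 by (metis tm matrix_mul_assoc)
  have "X = X ** (L ** X)" using X2 by (simp add: matrix_mul_assoc)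
  also have "\<dots> = X ** (transpose X ** transpose L)" using X3 by simp
  also have "\<dots> = X ** transpose X ** (transpose L ** transpose Y ** transpose L)"
    using tL by (metis matrix_mul_assoc)
  also have "\<dots> = X ** (transpose X ** transpose L) ** (transpose Y ** transpose L)"
    by (simp add: matrix_mul_assoc)
  also have "\<dots> = X ** (L ** X) ** (L ** Y)" using X3 Y3 by simp
  also have "\<dots> = (X ** L ** X) ** L ** Y" by (simp add: matrix_mul_assoc)
  also have "\<dots> = X ** L ** Y" using X2 by simp
  finally have e1: "X = X ** L ** Y" .
  have "Y = (Y ** L) ** Y" using Y2 by simp
  also have "\<dots> = (transpose L ** transpose Y) ** Y" using Y4 by simp
  also have "\<dots> = (transpose L ** transpose X ** transpose L) ** transpose Y ** Y"
    using X1 by (metis tm matrix_mul_assoc)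
  also have "\<dots> = (transpose L ** transpose X) ** (transpose L ** transpose Y) ** Y"
    by (simp add: matrix_mul_assoc)
  also have "\<dots> = (X ** L) ** (Y ** L) ** Y" using X4 Y4 by simp
  also have "\<dots> = X ** L ** (Y ** L ** Y)" by (simp add: matrix_mul_assoc)
  also have "\<dots> = X ** L ** Y" using Y2 by simp
  finally show ?thesis using e1 by simp
qed

lemma pinv_penrose:
  fixes L :: "real^'n^'n"
  assumes "transpose L = L"
  shows "penrose L (pinv L)" "transpose (pinv L) = pinv L"
proof -
  obtain X where X: "penrose L X" using penrose_exists[OF assms] by blast
  have "pinv L = X" unfolding pinv_def
    using X penrose_unique by blast
  then show "penrose L (pinv L)" using X by simp
  have "penrose L (transpose (pinv L))"
    using penrose_transpose[OF \<open>penrose L (pinv L)\<close>] assms by simp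
  then show "transpose (pinv L) = pinv L" using penrose_unique \<open>penrose L (pinv L)\<close> by blast
qed

lemma diag_inv:
  fixes r :: "real^'m"
  assumes "\<forall>i. r $ i > 0"
  shows "matrix_inv (diag_mat r) = diag_mat (\<chi> i. 1 / r $ i)"
proof -
  let ?D = "diag_mat r" and ?E = "diag_mat (\<chi> i. 1 / r $ i)"
  have m: "?D ** ?E = mat 1" "?E ** ?D = mat 1"
    using assms by (auto simp: diag_mat_def matrix_matrix_mult_def mat_def vec_eq_iff
        if_distrib[of "\<lambda>x. x * _"] if_distrib[of "\<lambda>x. _ * x"] sum.delta cong: if_cong) (metis less_irrefl)+
  have "?D ** matrix_inv ?D = mat 1 \<and> matrix_inv ?D ** ?D = mat 1"
    unfolding matrix_inv_def by (rule someI[of _ ?E]) (use m in simp)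
  then have "matrix_inv ?D = matrix_inv ?D ** (?D ** ?E)" using m by simp
  also have "\<dots> = ?E" using \<open>?D ** matrix_inv ?D = mat 1 \<and> matrix_inv ?D ** ?D = mat 1\<close>
    by (simp add: matrix_mul_assoc)
  finally show ?thesis .
qed

lemma amgm_term:
  fixes r x w :: real assumes "r > 0"
  shows "x * w \<le> (r * x^2 + w * (w / r)) / 2"
proof -
  have "0 \<le> (r * x - w)^2 / r" using assms by simp
  also have "(r * x - w)^2 / r = r * x^2 + w * (w / r) - 2 * x * w"
    using assms by (simp add: field_simps power2_eq_square)
  finally show ?thesis by simp
qed

theorem lemma2p1:
  fixes A :: "real ^ 'm ^ 'n" and b :: "real ^ 'n" and xs :: "real ^ 'm" and r :: "real ^ 'm"
  assumes "b \<in> range (\<lambda>x. A *v x)"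
    and "A *v xs = b"
    and "\<forall>x. A *v x = b \<longrightarrow> infnorm xs \<le> infnorm x"
    and "r \<in> prob_simplex"
    and "\<forall>i. r $ i > 0"
  shows "(infnorm xs)\<^sup>2 \<ge> b \<bullet> (pinv (A ** matrix_inv (diag_mat r) ** transpose A) *v b)"
proof -
  define E where "E = diag_mat (\<chi> i. 1 / r $ i)"
  define L where "L = A ** E ** transpose A"
  define X where "X = pinv L"
  have tE: "transpose E = E" unfolding E_def diag_mat_def transpose_def by (simp add: vec_eq_iff)
  have tL: "transpose L = L" unfolding L_def by (simp add: matrix_transpose_mul tE matrix_mul_assoc)
  have PX: "penrose L X" and tX: "transpose X = X" using pinv_penrose[OF tL] X_def by auto
  have goal: "b \<bullet> (pinv (A ** matrix_inv (diag_mat r) ** transpose A) *v b) = b \<bullet> (X *v b)"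
    using diag_inv[OF assms(5)] by (simp add: X_def L_def E_def)
  define z where "z = X *v b"
  define w where "w = transpose A *v z"
  define s where "s = b \<bullet> z"
  have h1: "s = xs \<bullet> w"
    unfolding s_def w_def using assms(2) dot_lmul_matrix[of xs "transpose A" z] by simp
  have zz: "z = X *v (L *v z)"
  proof -
    have "X ** L ** X = X" using PX unfolding penrose_def by simp
    then show ?thesis unfolding z_def by (metis matrix_vector_mul_assoc)
  qed
  have h2: "s = z \<bullet> (L *v z)"
    using symL_inner[OF tX, of b "L *v z"] zz unfolding s_def z_def by metis
  have h3: "z \<bullet> (L *v z) = w \<bullet> (E *v w)"
    unfolding L_def w_def using dot_lmul_matrix[of z A "E *v (transpose A *v z)"]
    by (simp add: matrix_vector_mul_assoc[symmetric])
  have h4: "w \<bullet> (E *v w) = (\<Sum>i\<in>UNIV. w$i * (w$i / r$i))"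
    unfolding inner_vec_def E_def diag_mat_def matrix_vector_mult_def
    by (simp add: if_distrib[of "\<lambda>x. x * _"] sum.delta cong: if_cong)
  have h5: "xs \<bullet> w = (\<Sum>i\<in>UNIV. xs$i * w$i)" unfolding inner_vec_def by simp
  define M where "M = (\<Sum>i\<in>UNIV. r$i * (xs$i)^2)"
  have "s \<le> (\<Sum>i\<in>UNIV. (r$i * (xs$i)^2 + w$i * (w$i / r$i)) / 2)"
    unfolding h1 h5 by (rule sum_mono) (use amgm_term assms(5) in blast)
  also have "\<dots> = (M + s) / 2"
    unfolding M_def h2 h3 h4 by (simp add: sum.distrib sum_divide_distrib[symmetric])
  finally have sM: "s \<le> M" by simp
  have "M \<le> (\<Sum>i\<in>UNIV. r$i * (infnorm xs)^2)"
  unfolding M_def proof (rule sum_mono)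
    fix i
    have "\<bar>xs$i\<bar>^2 \<le> (infnorm xs)^2"
      by (rule power_mono[OF component_le_infnorm_cart abs_ge_zero])
    then show "r$i * (xs$i)^2 \<le> r$i * (infnorm xs)^2"
      using assms(5) by (intro mult_left_mono) (auto simp: less_imp_le)
  qed
  also have "\<dots> = (infnorm xs)^2"
    using assms(4) unfolding prob_simplex_def by (simp add: sum_distrib_right[symmetric])
  finally show ?thesis using sM goal unfolding s_def z_def by simp
qed
end
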